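(* Let $K$ be a field, $A=\{\alpha_1,\dots,\alpha_m\}\subset K$ and $B=\{\beta_1,\dots,\beta_n\}\subset K$ finite sets with $|A|=m$, $|B|=n$, and $f=\prod_{i=1}^m(x-\alpha_i)$. Let $0\le d\le n-1$ and suppose $m\le d$. Then $$\operatorname{Syl}_{0,d}(A,B)=\begin{cases}0 & \text{if } m<d<n-1,\\ (-1)^{(m-d)(n-d)}\,f & \text{if } m<d=n-1 \text{ or } m=d\le n-1.\end{cases}$$
   Context: For finite sets $Y,Z$ of elements or indeterminates, $\mathcal{R}(Y,Z):=\prod_{y\in Y,z\in Z}(y-z)$, with $\mathcal{R}(Y,Z)=1$ if $Y$ or $Z$ is empty; for a single variable $x$, $\mathcal{R}(x,Z):=\mathcal{R}(\{x\},Z)$. For $0\le p\le m$, $0\le q\le n$, Sylvester's double sum is the polynomial in $x$ $$\operatorname{Syl}_{p,q}(A,B)(x):=\sum_{\substack{A'\subset A,\ B'\subset B\\ |A'|=p,\ |B'|=q}}\mathcal{R}(A',B')\,\mathcal{R}(A\setminus A',B\setminus B')\,\frac{\mathcal{R}(x,A')\,\mathcal{R}(x,B')}{\mathcal{R}(A',A\setminus A')\,\mathcal{R}(B',B\setminus B')}.$$ *)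

theory Defs
  imports "HOL-Computational_Algebra.Polynomial"
begin

definition Res :: "'a::comm_ring_1 set \<Rightarrow> 'a set \<Rightarrow> 'a" where
  "Res Y Z = (\<Prod>y\<in>Y. \<Prod>z\<in>Z. (y - z))"

definition Resx :: "'a::comm_ring_1 set \<Rightarrow> 'a poly" where
  "Resx Z = (\<Prod>z\<in>Z. [:- z, 1:])"

definition Syl :: "nat \<Rightarrow> nat \<Rightarrow> 'a::field set \<Rightarrow> 'a set \<Rightarrow> 'a poly" where
  "Syl p q A B =
     (\<Sum>A'\<in>{A'. A' \<subseteq> A \<and> card A' = p}. \<Sum>B'\<in>{B'. B' \<subseteq> B \<and> card B' = q}.
        smult (Res A' B' * Res (A - A') (B - B') / (Res A' (A - A') * Res B' (B - B')))
              (Resx A' * Resx B'))"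

end

theory Submission
  imports Defs
begin

lemma Resx_degree: "finite S \<Longrightarrow> degree (Resx S :: 'a::field poly) = card S"
  unfolding Resx_def by (subst degree_prod_eq_sum_degree) auto

lemma Resx_lead: "lead_coeff (Resx S :: 'a::field poly) = 1"
  unfolding Resx_def by (simp add: lead_coeff_prod)

lemma Resx_coeff: "finite S \<Longrightarrow> coeff (Resx S :: 'a::field poly) (card S) = 1"
  using Resx_lead[of S] Resx_degree[of S] by simp

lemma Resx_poly: "poly (Resx S) x = (\<Prod>z\<in>S. x - z)"
  unfolding Resx_def by (simp add: poly_prod)

definition T :: "nat \<Rightarrow> 'a::field set \<Rightarrow> 'a set \<Rightarrow> 'a poly" where
  "T d A B = (\<Sum>B'\<in>{B'. B' \<subseteq> B \<and> card B' = d}.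
        smult (Res A (B - B') / Res B' (B - B')) (Resx B'))"

lemma Syl_T: "finite A \<Longrightarrow> Syl 0 d A B = T d A B"
proof -
  assume fA: "finite A"
  have "{A'. A' \<subseteq> A \<and> card A' = 0} = {{}}" using fA
    by (auto dest: rev_finite_subset simp: card_0_eq)
  thus ?thesis unfolding Syl_def T_def by (simp add: Res_def Resx_def)
qed

lemma T_degree: "finite B \<Longrightarrow> degree (T d A B) \<le> d"
  unfolding T_def
  by (intro degree_sum_le) (auto intro: order.trans[OF degree_smult_le] simp: Resx_degree
      dest: rev_finite_subset)

lemma T_coeff: "finite B \<Longrightarrow> coeff (T d A B) d = (\<Sum>B'\<in>{B'. B' \<subseteq> B \<and> card B' = d}.
        Res A (B - B') / Res B' (B - B'))"
  unfolding T_def coeff_sum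
  by (intro sum.cong refl) (auto simp: Resx_coeff dest: rev_finite_subset)

lemma Res_insert_right: "finite X \<Longrightarrow> b \<notin> X \<Longrightarrow>
   Res Y (insert b X) = (\<Prod>y\<in>Y. y - b) * Res Y X"
  unfolding Res_def by (simp add: prod.distrib)

lemma Res_nonzero: "finite Y \<Longrightarrow> finite X \<Longrightarrow> Y \<inter> X = {} \<Longrightarrow> Res Y X \<noteq> (0::'a::field)"
  unfolding Res_def by (auto simp: prod_zero_iff)

lemma T_eval:
  assumes fA: "finite A" and fB: "finite B" and b0: "b0 \<in> B"
  shows "poly (T d A B) b0 = (-1)^d * (\<Prod>a\<in>A. a - b0) * coeff (T d A (B - {b0})) d"
proof -
  let ?S = "{B'. B' \<subseteq> B \<and> card B' = d}"
  let ?S2 = "{B'. B' \<subseteq> B - {b0} \<and> card B' = d}"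
  let ?c = "\<lambda>B'. Res A (B - B') / Res B' (B - B')"
  have fS: "finite ?S" using fB by simp
  have "poly (T d A B) b0 = (\<Sum>B'\<in>?S. ?c B' * (\<Prod>z\<in>B'. b0 - z))"
    unfolding T_def by (simp add: poly_sum Resx_poly)
  also have "\<dots> = (\<Sum>B'\<in>?S2. ?c B' * (\<Prod>z\<in>B'. b0 - z))"
  proof (rule sum.mono_neutral_right[OF fS])
    show "?S2 \<subseteq> ?S" by auto
    show "\<forall>i\<in>?S - ?S2. ?c i * (\<Prod>z\<in>i. b0 - z) = 0"
    proof
      fix i assume i: "i \<in> ?S - ?S2"
      then have "b0 \<in> i" by auto
      moreover have "finite i" using i fB by (auto dest: rev_finite_subset)
      ultimately show "?c i * (\<Prod>z\<in>i. b0 - z) = 0" by (simp add: prod_zero_iff)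
    qed
  qed
  also have "\<dots> = (\<Sum>B'\<in>?S2. (-1)^d * (\<Prod>a\<in>A. a - b0) *
       (Res A (B - {b0} - B') / Res B' (B - {b0} - B')))"
  proof (rule sum.cong[OF refl])
    fix B' assume B': "B' \<in> ?S2"
    define X where "X = B - {b0} - B'"
    have fX: "finite X" using fB by (simp add: X_def)
    have fB': "finite B'" using B' fB by (auto dest: rev_finite_subset)
    have b0X: "b0 \<notin> X" by (simp add: X_def)
    have BB: "B - B' = insert b0 X" using B' b0 by (auto simp: X_def)
    have ne1: "Res B' X \<noteq> 0" using fX fB' by (intro Res_nonzero) (auto simp: X_def)
    have ne2: "(\<Prod>y\<in>B'. y - b0) \<noteq> 0" using fB' B' by (auto simp: prod_zero_iff)
    have sg: "(\<Prod>z\<in>B'. b0 - z) = (-1)^d * (\<Prod>y\<in>B'. y - b0)"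
      using B' by (subst prod_diff_swap) auto
    show "?c B' * (\<Prod>z\<in>B'. b0 - z) = (-1)^d * (\<Prod>a\<in>A. a - b0) *
       (Res A (B - {b0} - B') / Res B' (B - {b0} - B'))"
      unfolding BB X_def[symmetric] Res_insert_right[OF fX b0X] sg
      using ne1 ne2 by (simp add: field_simps)
  qed
  also have "\<dots> = (-1)^d * (\<Prod>a\<in>A. a - b0) * coeff (T d A (B - {b0})) d"
    using fB by (simp add: T_coeff sum_distrib_left)
  finally show ?thesis .
qed

lemma T_card_eq:
  assumes fB: "finite B" and c: "card B = d"
  shows "coeff (T d A B) d = 1"
proof -
  have "{B'. B' \<subseteq> B \<and> card B' = d} = {B}"
    using fB c by auto (metis card_subset_eq)
  thus ?thesis using fB by (simp add: T_coeff Res_def)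
qed

lemma T_main:
  fixes A B :: "'a::field set"
  assumes fA: "finite A" and md: "card A \<le> d" and fB: "finite B" and cB: "card B = d + 1 + j"
  shows "T d A B = smult ((-1)^(card A + d) * ((-1)^(card A + d) * coeff (Resx A) d)^j) (Resx A)"
  using fB cB
proof (induction j arbitrary: B)
  case 0
  show ?case
  proof (rule poly_eqI_degree[of B])
    fix x assume x: "x \<in> B"
    have c: "coeff (T d A (B - {x})) d = 1"
      using 0 x by (intro T_card_eq) auto
    have p: "(\<Prod>a\<in>A. a - x) = (-1)^card A * poly (Resx A) x"
      by (subst prod_diff_swap) (simp add: Resx_poly)
    show "poly (T d A B) x = poly (smult ((-1)^(card A + d) * ((-1)^(card A + d) * coeff (Resx A) d)^0) (Resx A)) x"
      using T_eval[OF fA 0(1) x, of d] c p by (simp add: power_add)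
  next
    show "degree (T d A B) < card B" using T_degree[OF 0(1), of d A] 0 by simp
    show "degree (smult ((-1)^(card A + d) * ((-1)^(card A + d) * coeff (Resx A) d)^0) (Resx A)) < card B"
      using 0 md Resx_degree[OF fA] by simp
  qed
next
  case (Suc j)
  show ?case
  proof (rule poly_eqI_degree[of B])
    fix x assume x: "x \<in> B"
    have IH: "T d A (B - {x}) = smult ((-1)^(card A + d) * ((-1)^(card A + d) * coeff (Resx A) d)^j) (Resx A)"
      using Suc x by (intro Suc.IH) auto
    have p: "(\<Prod>a\<in>A. a - x) = (-1)^card A * poly (Resx A) x"
      by (subst prod_diff_swap) (simp add: Resx_poly)
    define sg where "sg = ((-1::'a)^(card A + d))"
    have sg: "(-1)^d * (-1)^card A = sg" by (simp add: sg_def power_add mult.commute)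
    have "poly (T d A B) x = ((-1)^d * (-1)^card A) * poly (Resx A) x * coeff (T d A (B - {x})) d"
      using T_eval[OF fA Suc(2) x, of d] p by (simp only: mult.assoc)
    also have "\<dots> = sg * poly (Resx A) x * (sg * (sg * coeff (Resx A) d)^j * coeff (Resx A) d)"
      unfolding sg IH sg_def by simp
    also have "\<dots> = sg * (sg * coeff (Resx A) d)^Suc j * poly (Resx A) x"
      by (simp only: power_Suc mult_ac)
    finally show "poly (T d A B) x = poly (smult ((-1)^(card A + d) * ((-1)^(card A + d) * coeff (Resx A) d)^Suc j) (Resx A)) x"
      by (simp add: sg_def)
  next
    show "degree (T d A B) < card B" using T_degree[OF Suc(2), of d A] Suc by simp
    show "degree (smult ((-1)^(card A + d) * ((-1)^(card A + d) * coeff (Resx A) d)^Suc j) (Resx A)) < card B"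
      by (rule le_less_trans[OF degree_smult_le]) (use Suc(3) md Resx_degree[OF fA] in simp)
  qed
qed

theorem corollary2p6:
  fixes A B :: "'a::field set" and m n d :: nat
  assumes "finite A" and "finite B"
    and "card A = m" and "card B = n"
    and "d \<le> n - 1" and "d < n"
    and "m \<le> d"
  shows "(m < d \<and> d < n - 1 \<longrightarrow> Syl 0 d A B = 0)
       \<and> ((m < d \<and> d = n - 1) \<or> (m = d \<and> d \<le> n - 1) \<longrightarrow>
            Syl 0 d A B = smult ((-1) powi ((int m - int d) * (int n - int d))) (Resx A))"
proof -
  define j where "j = n - d - 1"
  have nj: "card B = d + 1 + j" using assms by (simp add: j_def)
  have main: "Syl 0 d A B = smult ((-1)^(m + d) * ((-1)^(m + d) * coeff (Resx A) d)^j) (Resx A)"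
    using Syl_T[OF assms(1)] T_main[OF assms(1) _ assms(2) nj] assms by simp
  have dm: "degree (Resx A) = m" using Resx_degree[OF assms(1)] assms by simp
  have c1: "m < d \<and> d < n - 1 \<longrightarrow> Syl 0 d A B = 0"
  proof
    assume h: "m < d \<and> d < n - 1"
    then have c0: "coeff (Resx A) d = 0" using dm by (intro coeff_eq_0) simp
    from h have "j \<noteq> 0" by (simp add: j_def) arith
    then obtain i where "j = Suc i" by (cases j) auto
    then show "Syl 0 d A B = 0" using main c0 by simp
  qed
  have c2: "(m < d \<and> d = n - 1) \<or> (m = d \<and> d \<le> n - 1) \<longrightarrow>
            Syl 0 d A B = smult ((-1) powi ((int m - int d) * (int n - int d))) (Resx A)"
  proof
    assume h: "(m < d \<and> d = n - 1) \<or> (m = d \<and> d \<le> n - 1)"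
    show "Syl 0 d A B = smult ((-1) powi ((int m - int d) * (int n - int d))) (Resx A)"
    proof (cases "m = d")
      case True
      have c: "coeff (Resx A) d = 1" using Resx_coeff[OF assms(1)] assms True by simp
      have s: "(-1::'a)^(m + d) = 1" using True by (simp flip: mult_2)
      show ?thesis using main c s True by simp
    next
      case False
      with h have j0: "j = 0" and nd: "int n - int d = 1" and md: "m < d" using assms by (auto simp: j_def)
      have "(-1::'a) powi ((int m - int d) * (int n - int d)) = (-1) powi (int d - int m)"
        using nd power_int_minus_one_diff_commute by simp
      also have "\<dots> = (-1) powi (int (d - m))" using md by (simp add: of_nat_diff)
      also have "\<dots> = (-1) ^ (d - m)" by (simp add: power_int_of_nat)
      also have "\<dots> = (-1) ^ (m + d)"
      proof -
        have "m + d = (d - m) + 2 * m" using md by simp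
        then have "(-1::'a) ^ (m + d) = (-1) ^ (d - m) * ((-1) ^ 2) ^ m"
          by (simp only: power_add power_mult)
        then show ?thesis by simp
      qed
      finally show ?thesis using main j0 by simp
    qed
  qed
  show ?thesis using c1 c2 by blast
qed

end
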